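(* The irreducible polynomials over the tropical hyperfield $\mathbb T$ are precisely the polynomials of degree $1$, and the set of polynomials over $\mathbb T$ has the unique factorization property.
   Context: The tropical hyperfield $\mathbb T$ is the set $\mathbb R_{\ge0}$ with usual multiplication and hyperaddition $a\boxplus b=\{\max\{a,b\}\}$ if $a\ne b$ and $a\boxplus a=[0,a]$; equivalently $c\in a\boxplus b$ iff the maximum of $a,b,c$ is attained at least twice. Here $-a=a$. Iterated sums: $\boxplus_{i=1}^n a_i=\bigcup_{b\in\boxplus_{i=1}^{n-1}a_i} b\boxplus a_n$. A polynomial over $\mathbb T$ is a finitely supported sequence $(c_i)$ in $\mathbb T$, written $\sum c_iT^i$, with degree the largest $k$ with $c_k\ne0$. Hyperproduct: $p\boxdot q=\{\sum e_iT^i : e_i\in \boxplus_{k+l=i} c_kd_l\}$ for $p=\sum c_iT^i,q=\sum d_iT^i$, and $\boxdot_{i=1}^n q_i=\bigcup_{r\in\boxdot_{i=1}^{n-1}q_i} r\boxdot q_n$. $p\sim q$ means $p\in a\boxdot q$ for some $a\neq0$. $p$ is irreducible if $\deg p\ge1$ and $p\in q_1\boxdot q_2$ implies $p\sim q_1$ or $p\sim q_2$. The unique factorization property: whenever $p\in q_1\boxdot\cdots\boxdot q_n$ and $p\in q'_1\boxdot\cdots\boxdot q'_m$ with all factors irreducible, then $n=m$ and $q_i\sim q'_{\sigma(i)}$ for some permutation $\sigma$. *)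

theory Defs
  imports Main "HOL.Real"
begin

text \<open>Tropical hyperfield: elements are nonnegative reals. Hyperaddition.\<close>
definition thadd :: "real \<Rightarrow> real \<Rightarrow> real set" where
  "thadd a b = (if a \<noteq> b then {max a b} else {c. 0 \<le> c \<and> c \<le> a})"

text \<open>Iterated hypersum (left-nested); the empty sum is {0}, so that a singleton sum is {a}.\<close>
definition thsum_list :: "real list \<Rightarrow> real set" where
  "thsum_list xs = foldl (\<lambda>S a. \<Union>b\<in>S. thadd b a) {0} xs"

definition tpoly :: "(nat \<Rightarrow> real) \<Rightarrow> bool" where
  "tpoly p \<longleftrightarrow> (\<forall>i. 0 \<le> p i) \<and> finite {i. p i \<noteq> 0}"

definition tdeg :: "(nat \<Rightarrow> real) \<Rightarrow> nat" where
  "tdeg p = (if (\<forall>i. p i = 0) then 0 else Max {i. p i \<noteq> 0})"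

definition tconst :: "real \<Rightarrow> nat \<Rightarrow> real" where
  "tconst a = (\<lambda>i. if i = 0 then a else 0)"

definition thprod :: "(nat \<Rightarrow> real) \<Rightarrow> (nat \<Rightarrow> real) \<Rightarrow> (nat \<Rightarrow> real) set" where
  "thprod p q = {e. tpoly e \<and>
     (\<forall>i. e i \<in> thsum_list (map (\<lambda>k. p k * q (i - k)) [0..<Suc i]))}"

fun thprod_list :: "(nat \<Rightarrow> real) list \<Rightarrow> (nat \<Rightarrow> real) set" where
  "thprod_list [] = {tconst 1}"
| "thprod_list (q # qs) = foldl (\<lambda>S r. \<Union>s\<in>S. thprod s r) {q} qs"

definition tassoc :: "(nat \<Rightarrow> real) \<Rightarrow> (nat \<Rightarrow> real) \<Rightarrow> bool" where
  "tassoc p q \<longleftrightarrow> (\<exists>a. 0 \<le> a \<and> a \<noteq> 0 \<and> p \<in> thprod (tconst a) q)"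

definition tirred :: "(nat \<Rightarrow> real) \<Rightarrow> bool" where
  "tirred p \<longleftrightarrow> tpoly p \<and> tdeg p \<ge> 1 \<and>
     (\<forall>q1 q2. tpoly q1 \<longrightarrow> tpoly q2 \<longrightarrow> p \<in> thprod q1 q2 \<longrightarrow> tassoc p q1 \<or> tassoc p q2)"

end

theory Submission imports Defs Complex_Main "HOL-Combinatorics.List_Permutation" begin

lemma thsum_snoc: "thsum_list (xs @ [a]) = (\<Union>b\<in>thsum_list xs. thadd b a)"
  by (simp add: thsum_list_def)

lemma thadd_comm: "thadd a b = thadd b a"
  by (auto simp: thadd_def max.commute)

lemma thadd_0: "0 \<le> b \<Longrightarrow> thadd b 0 = {b}"
  by (auto simp: thadd_def max_def)

lemma thadd_gt: "y < x \<Longrightarrow> thadd x y = {x}"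
  by (auto simp: thadd_def max_def)

lemma thadd_le: "c \<in> thadd x y \<Longrightarrow> c \<le> max x y"
  by (auto simp: thadd_def split: if_splits)

lemma thadd_same: "0 \<le> c \<Longrightarrow> c \<le> x \<Longrightarrow> c \<in> thadd x x"
  by (auto simp: thadd_def)

lemma two_point:
  assumes nn: "\<And>k. 0 \<le> f k" and z: "\<And>k. k < n \<Longrightarrow> k \<noteq> ka \<Longrightarrow> k \<noteq> kb \<Longrightarrow> f k = 0"
    and lt: "ka < kb"
  shows "thsum_list (map f [0..<n]) =
    (if kb < n then thadd (f ka) (f kb) else if ka < n then {f ka} else {0})"
  using z
proof (induction n)
  case 0
  then show ?case by (simp add: thsum_list_def)
next
  case (Suc n)
  have IH: "thsum_list (map f [0..<n]) =
    (if kb < n then thadd (f ka) (f kb) else if ka < n then {f ka} else {0})"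
    using Suc by auto
  have eq: "thsum_list (map f [0..<Suc n]) = (\<Union>b\<in>thsum_list (map f [0..<n]). thadd b (f n))"
    by (simp add: thsum_snoc)
  have nnS: "\<And>b. b \<in> thsum_list (map f [0..<n]) \<Longrightarrow> 0 \<le> b"
    using nn by (auto simp: IH thadd_def max_def split: if_splits)
  show ?case
  proof (cases "n = ka \<or> n = kb")
    case False
    then have "f n = 0" using Suc.prems by auto
    then have "thsum_list (map f [0..<Suc n]) = thsum_list (map f [0..<n])"
      unfolding eq using nnS thadd_0 by auto
    then show ?thesis using IH False by auto
  next
    case True
    then show ?thesis
    proof
      assume "n = ka"
      then have "thsum_list (map f [0..<Suc n]) = thadd 0 (f ka)" using IH lt eq by auto
      also have "\<dots> = {f ka}" using thadd_0[OF nn] thadd_comm by metis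
      finally show ?thesis using \<open>n = ka\<close> lt by auto
    next
      assume "n = kb"
      then show ?thesis using IH lt eq by auto
    qed
  qed
qed

lemma tdeg_nz: "\<not>(\<forall>i. p i = 0) \<Longrightarrow> tdeg p = Max {i. p i \<noteq> 0}"
  unfolding tdeg_def by (rule if_not_P)

lemma tdeg_eqI:
  assumes "tpoly p" "p d \<noteq> 0" "\<And>i. i > d \<Longrightarrow> p i = 0"
  shows "tdeg p = d"
proof -
  have fin: "finite {i. p i \<noteq> 0}" using assms(1) by (simp add: tpoly_def)
  have "Max {i. p i \<noteq> 0} = d"
    by (rule Max_eqI) (use fin assms(2,3) in \<open>auto simp: not_less[symmetric]\<close>)
  moreover have "\<not> (\<forall>i. p i = 0)" using assms(2) by auto
  ultimately show ?thesis using tdeg_nz by metis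
qed

lemma tdeg_props:
  assumes "tpoly p" "\<not> (\<forall>i. p i = 0)"
  shows "p (tdeg p) \<noteq> 0 \<and> (\<forall>i > tdeg p. p i = 0)"
proof -
  have fin: "finite {i. p i \<noteq> 0}" using assms(1) by (simp add: tpoly_def)
  have ne: "{i. p i \<noteq> 0} \<noteq> {}" using assms(2) by auto
  have "tdeg p = Max {i. p i \<noteq> 0}" using assms(2) by (rule tdeg_nz)
  then show ?thesis using Max_in[OF fin ne] Max_ge[OF fin] by (auto simp: not_less[symmetric])
qed

lemma tdeg0_const:
  assumes "tpoly p" "tdeg p = 0"
  shows "p = tconst (p 0)"
proof (cases "\<forall>i. p i = 0")
  case True then show ?thesis by (auto simp: tconst_def)
next
  case False then show ?thesis using tdeg_props[OF assms(1) False] assms(2)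
    by (auto simp: tconst_def)
qed

lemma thprod_coef: "e \<in> thprod p q \<Longrightarrow> e i \<in> thsum_list (map (\<lambda>k. p k * q (i-k)) [0..<Suc i])"
  by (simp add: thprod_def)

lemma tpoly_nn: "tpoly p \<Longrightarrow> 0 \<le> p i"
  by (simp add: tpoly_def)

lemma tpoly_scale: "tpoly q \<Longrightarrow> 0 \<le> c \<Longrightarrow> tpoly (\<lambda>i. c * q i)"
  unfolding tpoly_def by (auto intro: finite_subset[of _ "{i. q i \<noteq> 0}"])

lemma scal_coef:
  assumes "tpoly q" "0 \<le> c"
  shows "thsum_list (map (\<lambda>k. tconst c k * q (i-k)) [0..<Suc i]) = {c * q i}"
  by (subst two_point[where ka=0 and kb="Suc i"])
     (use assms in \<open>auto simp: tconst_def tpoly_nn\<close>)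

lemma thprod_scal:
  assumes "tpoly q" "0 \<le> c"
  shows "thprod (tconst c) q = {\<lambda>i. c * q i}"
  using scal_coef[OF assms] tpoly_scale[OF assms]
  unfolding thprod_def by auto

lemma thprod_scal_r:
  assumes "tpoly q" "0 \<le> c" "e \<in> thprod q (tconst c)"
  shows "e = (\<lambda>i. q i * c)"
proof
  fix i
  have "e i \<in> thsum_list (map (\<lambda>k. q k * tconst c (i-k)) [0..<Suc i])"
    using thprod_coef[OF assms(3)] .
  also have "\<dots> = {q i * c}"
    by (subst two_point[where ka=i and kb="Suc i"])
       (use assms in \<open>auto simp: tconst_def tpoly_nn\<close>)
  finally show "e i = q i * c" by simp
qed

lemma tassoc_deg:
  assumes "tassoc p q" "tpoly q"
  shows "tdeg p = tdeg q"
proof -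
  obtain a where a: "0 < a" "p \<in> thprod (tconst a) q" using assms(1) unfolding tassoc_def
    using less_eq_real_def by blast
  then have p: "p = (\<lambda>i. a * q i)" using thprod_scal[OF assms(2)] by auto
  show ?thesis unfolding p tdeg_def using a(1) by auto
qed

lemma thprod_zero1:
  assumes "\<forall>i. q1 i = 0" "e \<in> thprod q1 q2"
  shows "e i = 0"
proof -
  have "e i \<in> thsum_list (map (\<lambda>k. q1 k * q2 (i-k)) [0..<Suc i])"
    using thprod_coef[OF assms(2)] .
  also have "\<dots> = {0}"
    by (subst two_point[where ka="Suc i" and kb="Suc (Suc i)"]) (use assms in auto)
  finally show ?thesis by simp
qed

lemma thprod_zero2:
  assumes "\<forall>i. q2 i = 0" "e \<in> thprod q1 q2"
  shows "e i = 0"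
proof -
  have "e i \<in> thsum_list (map (\<lambda>k. q1 k * q2 (i-k)) [0..<Suc i])"
    using thprod_coef[OF assms(2)] .
  also have "\<dots> = {0}"
    by (subst two_point[where ka="Suc i" and kb="Suc (Suc i)"]) (use assms in auto)
  finally show ?thesis by simp
qed

lemma thprod_top:
  assumes "tpoly q1" "tpoly q2" "\<not>(\<forall>i. q1 i = 0)" "\<not>(\<forall>i. q2 i = 0)" "e \<in> thprod q1 q2"
  shows "e (tdeg q1 + tdeg q2) = q1 (tdeg q1) * q2 (tdeg q2)"
    and "\<And>i. i > tdeg q1 + tdeg q2 \<Longrightarrow> e i = 0"
proof -
  note d1 = tdeg_props[OF assms(1,3)] and d2 = tdeg_props[OF assms(2,4)]
  let ?d = "tdeg q1 + tdeg q2"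
  have "e ?d \<in> thsum_list (map (\<lambda>k. q1 k * q2 (?d-k)) [0..<Suc ?d])"
    using thprod_coef[OF assms(5)] .
  also have "\<dots> = {q1 (tdeg q1) * q2 (tdeg q2)}"
  proof (subst two_point[where ka="tdeg q1" and kb="Suc ?d"])
    show "\<And>k. 0 \<le> q1 k * q2 (?d - k)" using assms(1,2) by (simp add: tpoly_nn)
    fix k assume "k < Suc ?d" "k \<noteq> tdeg q1" "k \<noteq> Suc ?d"
    then have "k > tdeg q1 \<or> ?d - k > tdeg q2" by auto
    then show "q1 k * q2 (?d - k) = 0" using d1 d2 by auto
  qed auto
  finally show "e ?d = q1 (tdeg q1) * q2 (tdeg q2)" by simp
  fix i assume i: "i > ?d"
  have "e i \<in> thsum_list (map (\<lambda>k. q1 k * q2 (i-k)) [0..<Suc i])"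
    using thprod_coef[OF assms(5)] .
  also have "\<dots> = {0}"
  proof (subst two_point[where ka="Suc i" and kb="Suc (Suc i)"])
    show "\<And>k. 0 \<le> q1 k * q2 (i - k)" using assms(1,2) by (simp add: tpoly_nn)
    fix k assume "k < Suc i"
    then have "k > tdeg q1 \<or> i - k > tdeg q2" using i by auto
    then show "q1 k * q2 (i - k) = 0" using d1 d2 by auto
  qed auto
  finally show "e i = 0" by simp
qed


lemma deg1_irred:
  assumes p: "tpoly p" "tdeg p = 1"
  shows "tirred p"
  unfolding tirred_def
proof (intro conjI allI impI)
  fix q1 q2 assume q: "tpoly q1" "tpoly q2" "p \<in> thprod q1 q2"
  have pnz: "\<not>(\<forall>i. p i = 0)" using p(2) unfolding tdeg_def by (metis zero_neq_one)
  have n1: "\<not>(\<forall>i. q1 i = 0)" using thprod_zero1[OF _ q(3)] pnz by blast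
  have n2: "\<not>(\<forall>i. q2 i = 0)" using thprod_zero2[OF _ q(3)] pnz by blast
  note d1 = tdeg_props[OF q(1) n1] and d2 = tdeg_props[OF q(2) n2]
  note top = thprod_top[OF q(1,2) n1 n2 q(3)]
  have "tdeg p = tdeg q1 + tdeg q2"
    by (rule tdeg_eqI[OF p(1)]) (use top d1 d2 in auto)
  then have "tdeg q1 = 0 \<or> tdeg q2 = 0" using p(2) by auto
  then show "tassoc p q1 \<or> tassoc p q2"
  proof
    assume "tdeg q1 = 0"
    then have e: "q1 = tconst (q1 0)" using tdeg0_const[OF q(1)] by blast
    have c: "0 \<le> q1 0" "q1 0 \<noteq> 0" using tpoly_nn[OF q(1)] d1 \<open>tdeg q1 = 0\<close> by auto
    have "p \<in> thprod (tconst (q1 0)) q2" using q(3) e by metis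
    then show ?thesis using c unfolding tassoc_def by blast
  next
    assume "tdeg q2 = 0"
    then have e: "q2 = tconst (q2 0)" using tdeg0_const[OF q(2)] by blast
    have c: "0 \<le> q2 0" "q2 0 \<noteq> 0" using tpoly_nn[OF q(2)] d2 \<open>tdeg q2 = 0\<close> by auto
    have "p = (\<lambda>i. q1 i * q2 0)" using thprod_scal_r[OF q(1) c(1)] q(3) e by metis
    then have "p \<in> thprod (tconst (q2 0)) q1" using thprod_scal[OF q(1) c(1)]
      by (simp add: mult.commute)
    then show ?thesis using c unfolding tassoc_def by blast
  qed
qed (use p in auto)

primrec pm :: "(nat \<Rightarrow> real) \<Rightarrow> real \<Rightarrow> nat \<Rightarrow> real" where
  "pm p r 0 = p 0"
| "pm p r (Suc k) = max (pm p r k) (p (Suc k) * r ^ Suc k)"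

lemma pm_ge: "j \<le> k \<Longrightarrow> p j * r ^ j \<le> pm p r k"
  by (induction k) (auto simp: le_Suc_eq max_def)

lemma pm_attained: "\<exists>j\<le>k. pm p r k = p j * r ^ j"
  by (induction k) (auto simp: max_def intro: le_SucI)

lemma pm_nn: "(\<And>i. 0 \<le> p i) \<Longrightarrow> 0 \<le> r \<Longrightarrow> 0 \<le> pm p r k"
  by (induction k) (auto simp: max_def)

lemma exists_root:
  fixes p :: "nat \<Rightarrow> real"
  assumes n: "0 < n" and pn: "0 < p n" and p0: "0 < p 0" and nn: "\<And>i. 0 \<le> p i"
  shows "\<exists>r>0. (\<forall>j<n. p j * r ^ j \<le> p n * r ^ n) \<and> (\<exists>j<n. p j * r ^ j = p n * r ^ n)"
proof -
  define g where "g j = root (n - j) (p j / p n)" for j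
  define r where "r = Max (g ` {..<n})"
  have fin: "finite (g ` {..<n})" and ne: "g ` {..<n} \<noteq> {}" using n by auto
  have ge: "g j \<le> r" if "j < n" for j using that fin unfolding r_def by auto
  obtain j0 where j0: "j0 < n" "r = g j0" using Max_in[OF fin ne] unfolding r_def by auto
  have gpow: "g j ^ (n - j) = p j / p n" if "j < n" for j
    unfolding g_def using that nn pn by (intro real_root_pow_pos2) auto
  have gnn: "0 \<le> g j" for j unfolding g_def using nn[of j] pn by (intro real_root_ge_zero) auto
  have rpos: "0 < r"
  proof -
    have "0 < g 0" unfolding g_def using n p0 pn by auto
    then show ?thesis using ge[OF n] by auto
  qed
  have key: "p j * r ^ j \<le> p n * r ^ n" if "j < n" for j
  proof -
    have "p j / p n \<le> r ^ (n - j)" using gpow[OF that] power_mono[OF ge[OF that] gnn] by metis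
    then have "p j \<le> p n * r ^ (n - j)" using pn by (simp add: divide_le_eq mult.commute)
    then have "p j * r ^ j \<le> p n * r ^ (n - j) * r ^ j" using rpos by (simp add: mult_right_mono)
    also have "\<dots> = p n * r ^ n" using that by (simp add: mult.assoc power_add[symmetric])
    finally show ?thesis .
  qed
  have eq: "p j0 * r ^ j0 = p n * r ^ n"
  proof -
    have "r ^ (n - j0) = p j0 / p n" using gpow[OF j0(1)] j0(2) by simp
    then have "p j0 = p n * r ^ (n - j0)" using pn by (simp add: field_simps)
    then have "p j0 * r ^ j0 = p n * (r ^ (n - j0) * r ^ j0)" by simp
    also have "\<dots> = p n * r ^ n" using j0(1) by (simp add: power_add[symmetric])
    finally show ?thesis .
  qed
  show ?thesis using rpos key eq j0(1) by blast
qed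


lemma tpoly_finI:
  assumes nn: "\<And>i. 0 \<le> q i" and z: "\<And>i. i \<ge> N \<Longrightarrow> q i = 0"
  shows "tpoly q"
proof -
  have "{i. q i \<noteq> 0} \<subseteq> {..<N}"
  proof
    fix i assume "i \<in> {i. q i \<noteq> 0}"
    then have "\<not> N \<le> i" using z by auto
    then show "i \<in> {..<N}" by simp
  qed
  then have "finite {i. q i \<noteq> 0}" by (rule finite_subset) simp
  then show ?thesis using nn by (simp add: tpoly_def)
qed

lemma factor_exists:
  assumes p: "tpoly p" and n: "tdeg p = n" "n \<ge> 1"
  shows "\<exists>q1 q2. tpoly q1 \<and> tpoly q2 \<and> p \<in> thprod q1 q2 \<and> tdeg q1 = 1 \<and> tdeg q2 = n - 1"
proof -
  have pnz: "\<not>(\<forall>i. p i = 0)" using n unfolding tdeg_def by (metis not_one_le_zero)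
  note pd = tdeg_props[OF p pnz]
  have pn: "0 < p n" using pd tpoly_nn[OF p, of n] n by auto
  have pz: "\<And>i. i > n \<Longrightarrow> p i = 0" using pd n by auto
  note nn = tpoly_nn[OF p]
  show ?thesis
  proof (cases "p 0 = 0")
    case True
    define q1 where "q1 = (\<lambda>i::nat. if i = 1 then 1 else (0::real))"
    define q2 where "q2 = (\<lambda>i. p (Suc i))"
    have t1: "tpoly q1" by (rule tpoly_finI[where N=2]) (auto simp: q1_def)
    have t2: "tpoly q2" by (rule tpoly_finI[where N=n]) (auto simp: q2_def nn pz)
    have d1: "tdeg q1 = 1" by (rule tdeg_eqI[OF t1]) (auto simp: q1_def)
    have d2: "tdeg q2 = n - 1" by (rule tdeg_eqI[OF t2]) (use n pn pz in \<open>auto simp: q2_def\<close>)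
    have "p \<in> thprod q1 q2"
      unfolding thprod_def
    proof (intro CollectI conjI allI p)
      fix i
      have "thsum_list (map (\<lambda>k. q1 k * q2 (i-k)) [0..<Suc i]) =
          (if 1 < Suc i then {q1 1 * q2 (i - 1)} else {0})"
        by (subst two_point[where ka=1 and kb="Suc (Suc i)"]) (auto simp: q1_def q2_def nn)
      also have "\<dots> = {p i}" using True by (cases i) (auto simp: q1_def q2_def)
      finally show "p i \<in> thsum_list (map (\<lambda>k. q1 k * q2 (i-k)) [0..<Suc i])" by simp
    qed
    then show ?thesis using t1 t2 d1 d2 by blast
  next
    case False
    then have p0: "0 < p 0" using nn[of 0] by auto
    obtain r j0 where r: "0 < r" "\<And>j. j < n \<Longrightarrow> p j * r ^ j \<le> p n * r ^ n"
      and j0: "j0 < n" "p j0 * r ^ j0 = p n * r ^ n"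
      using exists_root[of n p] n pn p0 nn by auto
    have pmn: "pm p r (n - 1) = p n * r ^ n"
    proof (rule antisym)
      obtain j where "j \<le> n - 1" "pm p r (n - 1) = p j * r ^ j" using pm_attained by blast
      then show "pm p r (n - 1) \<le> p n * r ^ n" using r(2)[of j] n by auto
      show "p n * r ^ n \<le> pm p r (n - 1)" using pm_ge[of j0 "n - 1" p r] j0 by auto
    qed
    define q1 where "q1 = (\<lambda>i::nat. if i = 0 then r else if i = 1 then 1 else (0::real))"
    define q2 where "q2 = (\<lambda>k. if k < n then pm p r k / r ^ Suc k else 0)"
    have q2nn: "0 \<le> q2 k" for k unfolding q2_def using pm_nn[of p r k, OF nn] r(1) by simp
    have t1: "tpoly q1" by (rule tpoly_finI[where N=2]) (use r in \<open>auto simp: q1_def\<close>)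
    have t2: "tpoly q2" by (rule tpoly_finI[where N=n, OF q2nn]) (simp add: q2_def)
    have d1: "tdeg q1 = 1" by (rule tdeg_eqI[OF t1]) (auto simp: q1_def)
    have q2top: "q2 (n - 1) = p n" unfolding q2_def using n pmn r(1) by auto
    have d2: "tdeg q2 = n - 1" by (rule tdeg_eqI[OF t2]) (use n pn q2top in \<open>auto simp: q2_def\<close>)
    have "p \<in> thprod q1 q2"
      unfolding thprod_def
    proof (intro CollectI conjI allI p)
      fix i
      have eq: "thsum_list (map (\<lambda>k. q1 k * q2 (i-k)) [0..<Suc i]) =
          (if 1 < Suc i then thadd (r * q2 i) (q2 (i - 1)) else {r * q2 0})"
        by (subst two_point[where ka=0 and kb=1]) (use r in \<open>auto simp: q1_def q2nn\<close>)
      have "p i \<in> (if 1 < Suc i then thadd (r * q2 i) (q2 (i - 1)) else {r * q2 0})"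
      proof (cases "i = 0")
        case True
        then show ?thesis using n r(1) by (simp add: q2_def)
      next
        case False
        then have i1: "1 < Suc i" by auto
        consider "i < n" | "i = n" | "i > n" by linarith
        then show ?thesis
        proof cases
          case 1
          define x where "x = pm p r (i - 1) / r ^ i"
          have Si: "Suc (i - 1) = i" using False by auto
          have a: "q2 (i - 1) = x" unfolding q2_def x_def using 1 Si by auto
          have "r * q2 i = r * (max (pm p r (i - 1)) (p i * r ^ i) / r ^ Suc i)"
            unfolding q2_def using 1 pm.simps(2)[of p r "i - 1"] Si by auto
          also have "\<dots> = max (pm p r (i - 1)) (p i * r ^ i) / r ^ i"
            using r(1) by simp
          also have "\<dots> = max x (p i)"
            unfolding x_def using r(1) by (simp add: max_divide_distrib_right)
          finally have b: "r * q2 i = max x (p i)" .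
          show ?thesis
          proof (cases "p i > x")
            case True
            then show ?thesis using i1 a b thadd_gt[OF True] by auto
          next
            case F: False
            then show ?thesis using i1 a b thadd_same[OF nn F[unfolded not_less]] by (auto simp: max_def)
          qed
        next
          case 2
          have "q2 i = 0" using 2 by (simp add: q2_def)
          moreover have "thadd 0 (p n) = {p n}" using pn by (auto simp: thadd_def)
          ultimately have "thadd (r * q2 i) (q2 (i - 1)) = {p n}"
            using 2 q2top by simp
          then show ?thesis using 2 i1 by auto
        next
          case 3
          have "q2 (i - 1) = 0" "q2 i = 0" using 3 by (auto simp: q2_def)
          then show ?thesis using 3 i1 pz[of i] thadd_0[of 0] by auto
        qed
      qed
      then show "p i \<in> thsum_list (map (\<lambda>k. q1 k * q2 (i-k)) [0..<Suc i])" using eq by simp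
    qed
    then show ?thesis using t1 t2 d1 d2 by blast
  qed
qed

lemma irred_deg1:
  assumes p: "tpoly p" and ir: "tirred p"
  shows "tdeg p = 1"
proof (rule ccontr)
  assume ne: "tdeg p \<noteq> 1"
  have ge: "tdeg p \<ge> 1" using ir unfolding tirred_def by (elim conjE)
  obtain q1 q2 where q: "tpoly q1" "tpoly q2" "p \<in> thprod q1 q2" "tdeg q1 = 1" "tdeg q2 = tdeg p - 1"
    using factor_exists[OF p refl ge] by blast
  have "tassoc p q1 \<or> tassoc p q2" using ir q(1,2,3) unfolding tirred_def by blast
  then show False
  proof
    assume "tassoc p q1" then have "tdeg p = tdeg q1" by (rule tassoc_deg[OF _ q(1)])
    then show False using q(4) ne by simp
  next
    assume "tassoc p q2" then have "tdeg p = tdeg q2" by (rule tassoc_deg[OF _ q(2)])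
    then have "tdeg p = tdeg p - 1" using q(5) by simp
    then show False using ge by simp
  qed
qed
lemma part1: "tpoly p \<Longrightarrow> tirred p \<longleftrightarrow> tdeg p = 1"
  using irred_deg1[of p] deg1_irred[of p] by (intro iffI) auto


definition G :: "real multiset \<Rightarrow> real \<Rightarrow> real" where
  "G R t = prod_mset (image_mset (\<lambda>x. max t x) R)"

lemma G_empty[simp]: "G {#} t = 1" by (simp add: G_def)
lemma G_add[simp]: "G (add_mset x R) t = max t x * G R t" by (simp add: G_def)

lemma G_ge: "0 < t \<Longrightarrow> t ^ size R \<le> G R t"
proof (induction R)
  case empty then show ?case by simp
next
  case (add x R)
  have "t * t ^ size R \<le> max t x * G R t"
    using add by (intro mult_mono) auto
  then show ?case by simp
qed

lemma G_pos: "0 < t \<Longrightarrow> 0 < G R t"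
  using G_ge[of t R] zero_less_power[of t "size R"] by linarith

definition deg1 :: "(nat \<Rightarrow> real) \<Rightarrow> bool" where
  "deg1 q \<longleftrightarrow> tpoly q \<and> 0 < q 1 \<and> (\<forall>k\<ge>2. q k = 0)"

lemma irred_deg1': "tirred q \<Longrightarrow> deg1 q"
proof -
  assume ir: "tirred q"
  then have t: "tpoly q" by (simp add: tirred_def)
  then have d: "tdeg q = 1" using part1 ir by blast
  have nz: "\<not>(\<forall>i. q i = 0)" using d unfolding tdeg_def by (metis zero_neq_one)
  show "deg1 q" using tdeg_props[OF t nz] d tpoly_nn[OF t, of 1] t
    unfolding deg1_def by (auto simp: less_eq_real_def)
qed

definition tinv :: "(nat \<Rightarrow> real) \<Rightarrow> real \<Rightarrow> real multiset \<Rightarrow> bool" where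
  "tinv s C R \<longleftrightarrow> (\<forall>j. 0 \<le> s j) \<and> 0 < C \<and>
     (\<forall>j t. 0 < t \<longrightarrow> s j * t ^ j \<le> C * G R t) \<and>
     (\<forall>t. 0 < t \<longrightarrow> t \<notin># R \<longrightarrow> (\<exists>j. s j * t ^ j = C * G R t))"

lemma inv_base:
  assumes "deg1 q"
  shows "tinv q (q 1) {#q 0 / q 1#}"
proof -
  have t: "tpoly q" and a: "0 < q 1" and z: "\<And>k. k \<ge> 2 \<Longrightarrow> q k = 0"
    using assms by (auto simp: deg1_def)
  have b: "q 0 = q 1 * (q 0 / q 1)" using a by simp
  have I1: "q j * t ^ j \<le> q 1 * max t (q 0 / q 1)" if "0 < t" for j t
  proof -
    consider "j = 0" | "j = 1" | "j \<ge> 2" by linarith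
    then show ?thesis
    proof cases
      case 1
      have "q 0 \<le> q 1 * max t (q 0 / q 1)" by (subst b) (rule mult_left_mono, use a in auto)
      then show ?thesis using 1 by simp
    next
      case 2 then show ?thesis using a by (simp add: mult_left_mono)
    next
      case 3 then show ?thesis using a that by (simp add: z)
    qed
  qed
  have I2: "\<exists>j. q j * t ^ j = q 1 * max t (q 0 / q 1)" if "0 < t" "t \<noteq> q 0 / q 1" for t
  proof (cases "t > q 0 / q 1")
    case True
    then show ?thesis by (intro exI[of _ 1]) (simp add: max_def)
  next
    case False
    then have "max t (q 0 / q 1) = q 0 / q 1" by (simp add: max_def)
    then show ?thesis using b by (intro exI[of _ 0]) simp
  qed
  show ?thesis unfolding tinv_def using I1 I2 a tpoly_nn[OF t] by auto
qed

lemma prod_coef0: "e \<in> thprod s q \<Longrightarrow> (\<And>k. 0 \<le> s k) \<Longrightarrow> tpoly q \<Longrightarrow> e 0 = s 0 * q 0"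
proof -
  assume e: "e \<in> thprod s q" and nn: "\<And>k. 0 \<le> s k" and t: "tpoly q"
  have "e 0 \<in> thsum_list (map (\<lambda>k. s k * q (0-k)) [0..<Suc 0])" using thprod_coef[OF e] .
  also have "\<dots> = {s 0 * q 0}"
    by (subst two_point[where ka=0 and kb=1]) (use nn tpoly_nn[OF t] in auto)
  finally show ?thesis by simp
qed

lemma prod_coefS:
  assumes e: "e \<in> thprod s q" and nn: "\<And>k. 0 \<le> s k" and d: "deg1 q" and i: "0 < i"
  shows "e i \<in> thadd (s (i - 1) * q 1) (s i * q 0)"
proof -
  have t: "tpoly q" and z: "\<And>k. k \<ge> 2 \<Longrightarrow> q k = 0" using d by (auto simp: deg1_def)
  have "e i \<in> thsum_list (map (\<lambda>k. s k * q (i-k)) [0..<Suc i])" using thprod_coef[OF e] .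
  also have "\<dots> = thadd (s (i - 1) * q (i - (i - 1))) (s i * q (i - i))"
  proof (subst two_point[where ka="i - 1" and kb=i])
    show "\<And>k. 0 \<le> s k * q (i - k)" using nn tpoly_nn[OF t] by simp
    fix k assume "k < Suc i" "k \<noteq> i - 1" "k \<noteq> i"
    then have "i - k \<ge> 2" by auto
    then show "s k * q (i - k) = 0" using z by simp
  qed (use i in auto)
  also have "i - (i - 1) = 1" using i by simp
  finally show ?thesis by simp
qed


lemma inv_step:
  assumes tinv: "tinv s C R" and d: "deg1 q" and e: "e \<in> thprod s q"
  shows "tinv e (C * q 1) (add_mset (q 0 / q 1) R)"
proof -
  define a where "a = q 1"
  define \<rho> where "\<rho> = q 0 / q 1"
  have t: "tpoly q" and apos: "0 < a" using d by (auto simp: deg1_def a_def)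
  have b: "q 0 = a * \<rho>" using apos by (simp add: a_def \<rho>_def)
  have rnn: "0 \<le> \<rho>" unfolding \<rho>_def using tpoly_nn[OF t, of 0] tpoly_nn[OF t, of 1] by simp
  have snn: "\<And>j. 0 \<le> s j" and Cpos: "0 < C"
    and I1: "\<And>j t. 0 < t \<Longrightarrow> s j * t ^ j \<le> C * G R t"
    and I2: "\<And>t. 0 < t \<Longrightarrow> t \<notin># R \<Longrightarrow> \<exists>j. s j * t ^ j = C * G R t"
    using tinv unfolding tinv_def by auto
  have enn: "\<And>j. 0 \<le> e j" using e by (auto simp: thprod_def tpoly_def)
  have e0: "e 0 = s 0 * (a * \<rho>)" using prod_coef0[OF e snn t] b by simp
  have eS: "\<And>i. 0 < i \<Longrightarrow> e i \<in> thadd (s (i - 1) * a) (s i * (a * \<rho>))"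
    using prod_coefS[OF e snn d] b a_def by simp
  have J1: "e i * x ^ i \<le> (C * a) * (max x \<rho> * G R x)" if x: "0 < x" for i x
  proof -
    define M where "M = max x \<rho>"
    show ?thesis
    proof (cases "i = 0")
      case True
      have "s 0 \<le> C * G R x" using I1[OF x, of 0] by simp
      moreover have "a * \<rho> \<le> a * M" unfolding M_def using apos by (intro mult_left_mono) auto
      ultimately have "s 0 * (a * \<rho>) \<le> (C * G R x) * (a * M)"
        using snn[of 0] apos rnn using Cpos G_pos[OF x, of R] by (intro mult_mono) (auto simp: less_imp_le)
      then show ?thesis using True e0 by (simp add: M_def ac_simps)
    next
      case False
      have xi: "x ^ i = x * x ^ (i - 1)" using False by (cases i) auto
      have A: "s (i - 1) * a * x ^ i \<le> (C * a) * (M * G R x)"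
      proof -
        have "s (i - 1) * a * x ^ i = (a * x) * (s (i - 1) * x ^ (i - 1))" by (simp add: xi ac_simps)
        also have "\<dots> \<le> (a * M) * (C * G R x)"
        proof (rule mult_mono)
          show "a * x \<le> a * M" unfolding M_def using apos by (intro mult_left_mono) auto
          show "s (i - 1) * x ^ (i - 1) \<le> C * G R x" by (rule I1[OF x])
          show "0 \<le> a * M" unfolding M_def using apos x by simp
          show "0 \<le> s (i - 1) * x ^ (i - 1)" using snn[of "i-1"] x by simp
        qed
        finally show ?thesis by (simp add: ac_simps)
      qed
      have B: "s i * (a * \<rho>) * x ^ i \<le> (C * a) * (M * G R x)"
      proof -
        have "s i * (a * \<rho>) * x ^ i = (a * \<rho>) * (s i * x ^ i)" by (simp add: ac_simps)
        also have "\<dots> \<le> (a * M) * (C * G R x)"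
        proof (rule mult_mono)
          show "a * \<rho> \<le> a * M" unfolding M_def using apos by (intro mult_left_mono) auto
          show "s i * x ^ i \<le> C * G R x" by (rule I1[OF x])
          show "0 \<le> a * M" unfolding M_def using apos x by simp
          show "0 \<le> s i * x ^ i" using snn[of i] x by simp
        qed
        finally show ?thesis by (simp add: ac_simps)
      qed
      have "e i \<le> max (s (i - 1) * a) (s i * (a * \<rho>))" using thadd_le eS False by blast
      then have "e i * x ^ i \<le> max (s (i - 1) * a) (s i * (a * \<rho>)) * x ^ i"
        using x by (intro mult_right_mono) auto
      also have "\<dots> = max (s (i - 1) * a * x ^ i) (s i * (a * \<rho>) * x ^ i)"
        using x by (simp add: max_mult_distrib_right)
      also have "\<dots> \<le> (C * a) * (M * G R x)" using A B by simp
      finally show ?thesis by (simp add: M_def)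
    qed
  qed
  have J2: "\<exists>j. e j * x ^ j = (C * a) * (max x \<rho> * G R x)"
    if x: "0 < x" "x \<noteq> \<rho>" "x \<notin># R" for x
  proof -
    obtain j where j: "s j * x ^ j = C * G R x" using I2 x by blast
    have CG: "0 < C * G R x" using Cpos G_pos[OF x(1), of R] by simp
    show ?thesis
    proof (cases "x > \<rho>")
      case True
      have lt: "s (Suc j) * (a * \<rho>) < s j * a"
      proof -
        have "s (Suc j) * (a * \<rho>) * x ^ Suc j = (a * \<rho>) * (s (Suc j) * x ^ Suc j)" by (simp add: ac_simps)
        also have "\<dots> \<le> (a * \<rho>) * (C * G R x)"
          using I1[OF x(1), of "Suc j"] apos rnn by (intro mult_left_mono) auto
        also have "\<dots> < (a * x) * (C * G R x)"
          using CG apos True by (intro mult_strict_right_mono) auto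
        also have "\<dots> = s j * a * x ^ Suc j" using j by (simp add: ac_simps)
        finally show ?thesis using mult_less_cancel_right_pos[OF zero_less_power[OF x(1)]] by blast
      qed
      have "e (Suc j) = s j * a" using eS[of "Suc j"] thadd_gt[OF lt] by simp
      then have "e (Suc j) * x ^ Suc j = (C * a) * (max x \<rho> * G R x)"
        using j True by (simp add: max_def ac_simps)
      then show ?thesis by blast
    next
      case False
      then have lt: "x < \<rho>" using x(2) by simp
      show ?thesis
      proof (cases "j = 0")
        case True
        then have "e 0 * x ^ 0 = (C * a) * (max x \<rho> * G R x)"
          using j e0 lt by (simp add: max_def ac_simps)
        then show ?thesis by blast
      next
        case False
        have xj: "x ^ j = x * x ^ (j - 1)" using False by (cases j) auto
        have lt2: "s (j - 1) * a < s j * (a * \<rho>)"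
        proof -
          have "s (j - 1) * a * x ^ j = (a * x) * (s (j - 1) * x ^ (j - 1))" by (simp add: xj ac_simps)
          also have "\<dots> \<le> (a * x) * (C * G R x)"
            using I1[OF x(1), of "j - 1"] apos x(1) by (intro mult_left_mono) auto
          also have "\<dots> < (a * \<rho>) * (C * G R x)"
            using CG apos lt by (intro mult_strict_right_mono) auto
          also have "\<dots> = s j * (a * \<rho>) * x ^ j" using j by (simp add: ac_simps)
          finally show ?thesis using mult_less_cancel_right_pos[OF zero_less_power[OF x(1)]] by blast
        qed
        have "e j \<in> thadd (s j * (a * \<rho>)) (s (j - 1) * a)" using eS[of j] False thadd_comm by simp
        then have "e j = s j * (a * \<rho>)" using thadd_gt[OF lt2] by simp
        then have "e j * x ^ j = (C * a) * (max x \<rho> * G R x)"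
          using j lt by (simp add: max_def ac_simps)
        then show ?thesis by blast
      qed
    qed
  qed
  have "tinv e (C * a) (add_mset \<rho> R)" unfolding tinv_def
    using enn Cpos apos J1 J2 by auto
  then show ?thesis unfolding a_def \<rho>_def .
qed


lemma inv_foldl:
  "(\<forall>q\<in>set qs. deg1 q) \<Longrightarrow> (\<forall>s\<in>S. tinv s C R) \<Longrightarrow>
   p \<in> foldl (\<lambda>S r. \<Union>s\<in>S. thprod s r) S qs \<Longrightarrow>
   tinv p (C * prod_list (map (\<lambda>q. q 1) qs)) (R + mset (map (\<lambda>q. q 0 / q 1) qs))"
proof (induction qs arbitrary: S C R)
  case Nil
  then show ?case by simp
next
  case (Cons q qs)
  have h2: "\<forall>s\<in>(\<Union>s\<in>S. thprod s q). tinv s (C * q 1) (add_mset (q 0 / q 1) R)"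
    using Cons.prems(1,2) inv_step by auto
  have h1: "\<forall>q\<in>set qs. deg1 q" using Cons.prems(1) by simp
  have h3: "p \<in> foldl (\<lambda>S r. \<Union>s\<in>S. thprod s r) (\<Union>s\<in>S. thprod s q) qs" using Cons.prems(3) by simp
  have "tinv p (C * q 1 * prod_list (map (\<lambda>q. q 1) qs)) (add_mset (q 0 / q 1) R + mset (map (\<lambda>q. q 0 / q 1) qs))"
    by (rule Cons.IH[OF h1 h2 h3])
  then show ?case by (simp add: mult.assoc)
qed

lemma inv_prodlist:
  assumes "qs \<noteq> []" "\<forall>q\<in>set qs. deg1 q" "p \<in> thprod_list qs"
  shows "tinv p (prod_list (map (\<lambda>q. q 1) qs)) (mset (map (\<lambda>q. q 0 / q 1) qs))"
proof -
  obtain q qs' where qs: "qs = q # qs'" using assms(1) by (cases qs) auto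
  have "tinv p (q 1 * prod_list (map (\<lambda>q. q 1) qs')) ({#q 0 / q 1#} + mset (map (\<lambda>q. q 0 / q 1) qs'))"
    by (rule inv_foldl) (use assms inv_base qs in auto)
  then show ?thesis using qs by simp
qed

lemma big_t: "finite F \<Longrightarrow> \<exists>t::real. t > T \<and> t \<notin> F"
proof -
  assume f: "finite F"
  define t where "t = Max (insert T F) + 1"
  have "x \<le> Max (insert T F)" if "x \<in> insert T F" for x using f that by simp
  then have "t > T" "t \<notin> F" unfolding t_def by force+
  then show ?thesis by blast
qed

lemma between_t: "(a::real) < b \<Longrightarrow> finite F \<Longrightarrow> \<exists>t. a < t \<and> t < b \<and> t \<notin> F"
proof -
  assume ab: "a < b" and f: "finite F"
  have "infinite ({a<..<b} - F)" using ab f by (simp add: Diff_infinite_finite)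
  then obtain t where "t \<in> {a<..<b} - F" by (metis finite.emptyI ex_in_conv)
  then show ?thesis by auto
qed

lemma G_big: "(\<forall>x\<in>#R. x < t) \<Longrightarrow> G R t = t ^ size R"
  by (induction R) (auto simp: max_def)

lemma pow_contra:
  fixes t1 t2 C C' :: real
  assumes t: "0 < t1" "t1 < t2" and C: "0 < C" "0 < C'"
    and e1: "C * t1 ^ n = C' * t1 ^ m" and e2: "C * t2 ^ n = C' * t2 ^ m" and nm: "n < m"
  shows False
proof -
  define k where "k = m - n"
  have m: "m = n + k" and k: "0 < k" using nm by (auto simp: k_def)
  have "C * t1 ^ n = (C' * t1 ^ k) * t1 ^ n" using e1 by (simp add: m power_add ac_simps)
  then have c1: "C = C' * t1 ^ k" using t by simp
  have "C * t2 ^ n = (C' * t2 ^ k) * t2 ^ n" using e2 by (simp add: m power_add ac_simps)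
  then have c2: "C = C' * t2 ^ k" using t by simp
  have "t1 ^ k < t2 ^ k" using t k by (intro power_strict_mono) auto
  then show False using c1 c2 C by simp
qed

lemma sizes_eq:
  assumes F: "finite F" and C: "0 < C" "0 < C'"
    and eq: "\<And>t. 0 < t \<Longrightarrow> t \<notin> F \<Longrightarrow> C * G R t = C' * G R' t"
  shows "size R = size R' \<and> C = C'"
proof -
  define T where "T = Max (insert 1 (set_mset R \<union> set_mset R'))"
  have Tge: "x \<le> T" if "x \<in># R \<or> x \<in># R'" for x unfolding T_def using that by simp
  have T1: "1 \<le> T" unfolding T_def by simp
  obtain t1 where t1: "t1 > T" "t1 \<notin> F" using big_t[OF F] by blast
  obtain t2 where t2: "t2 > t1" "t2 \<notin> F" using big_t[OF F] by blast
  have p1: "0 < t1" and p2: "0 < t2" using t1 t2 T1 by auto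
  have g1: "G R t1 = t1 ^ size R" "G R' t1 = t1 ^ size R'"
    using Tge t1 by (force intro!: G_big)+
  have g2: "G R t2 = t2 ^ size R" "G R' t2 = t2 ^ size R'"
    using Tge t1 t2 by (force intro!: G_big)+
  have e1: "C * t1 ^ size R = C' * t1 ^ size R'" using eq[OF p1 t1(2)] g1 by simp
  have e2: "C * t2 ^ size R = C' * t2 ^ size R'" using eq[OF p2 t2(2)] g2 by simp
  have "size R = size R'"
  proof (rule ccontr)
    assume "size R \<noteq> size R'"
    then consider "size R < size R'" | "size R' < size R" by linarith
    then show False
    proof cases
      case 1 show False by (rule pow_contra[OF p1 t2(1) C e1 e2 1])
    next
      case 2 show False by (rule pow_contra[OF p1 t2(1) C(2,1) e1[symmetric] e2[symmetric] 2])
    qed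
  qed
  moreover then have "C = C'" using e1 p1 by simp
  ultimately show ?thesis by blast
qed

lemma key_in:
  assumes rho: "\<rho> \<in># R" and R': "\<forall>x\<in>#R'. 0 \<le> x \<and> x \<le> \<rho>" "R' \<noteq> {#}"
    and sz: "size R = size R'" and F: "finite F"
    and eq: "\<And>t. 0 < t \<Longrightarrow> t \<notin> F \<Longrightarrow> G R t = G R' t"
  shows "\<rho> \<in># R'"
proof (rule ccontr)
  assume nin: "\<rho> \<notin># R'"
  define \<alpha> where "\<alpha> = Max (set_mset R')"
  have fin: "finite (set_mset R')" by simp
  have ne: "set_mset R' \<noteq> {}" using R'(2) by simp
  have \<alpha>in: "\<alpha> \<in># R'" unfolding \<alpha>_def using Max_in[OF fin ne] by simp
  have \<alpha>ge: "x \<le> \<alpha>" if "x \<in># R'" for x unfolding \<alpha>_def using that by simp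
  have a0: "0 \<le> \<alpha>" using R'(1) \<alpha>in by blast
  have alr: "\<alpha> < \<rho>" using R'(1) \<alpha>in nin by (metis order_le_less)
  obtain t where t: "\<alpha> < t" "t < \<rho>" "t \<notin> F" using between_t[OF alr F] by blast
  have tp: "0 < t" using t a0 by simp
  have g': "G R' t = t ^ size R'" using \<alpha>ge t by (force intro!: G_big)
  obtain R0 where R0: "R = add_mset \<rho> R0" using rho by (metis insert_DiffM)
  have "t ^ size R0 \<le> G R0 t" by (rule G_ge[OF tp])
  then have "t * t ^ size R0 < \<rho> * G R0 t"
    using t tp by (intro mult_less_le_imp_less) auto
  moreover have "t ^ size R' = t * t ^ size R0" using sz R0 by (metis power_Suc size_add_mset)
  ultimately have "G R' t < G R t" using g' R0 t by (simp add: max_def)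
  then show False using eq[OF tp t(3)] by simp
qed

lemma G_unique:
  "size R = n \<Longrightarrow> size R' = n \<Longrightarrow> (\<forall>x\<in>#R. 0 \<le> x) \<Longrightarrow> (\<forall>x\<in>#R'. 0 \<le> x) \<Longrightarrow> finite F \<Longrightarrow>
   (\<forall>t. 0 < t \<longrightarrow> t \<notin> F \<longrightarrow> G R t = G R' t) \<Longrightarrow> R = R'"
proof (induction n arbitrary: R R')
  case 0 then show ?case by simp
next
  case (Suc n)
  define \<rho> where "\<rho> = Max (set_mset R \<union> set_mset R')"
  have ne: "set_mset R \<union> set_mset R' \<noteq> {}" using Suc.prems(1) by auto
  have fin: "finite (set_mset R \<union> set_mset R')" by simp
  have rin: "\<rho> \<in># R \<or> \<rho> \<in># R'" unfolding \<rho>_def using Max_in[OF fin ne] by simp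
  have rge: "x \<le> \<rho>" if "x \<in># R \<or> x \<in># R'" for x unfolding \<rho>_def using that by simp
  have Rne: "R \<noteq> {#}" "R' \<noteq> {#}" using Suc.prems(1,2) by auto
  have both: "\<rho> \<in># R \<and> \<rho> \<in># R'"
    using rin
  proof
    assume a: "\<rho> \<in># R"
    have "\<rho> \<in># R'" by (rule key_in[OF a _ Rne(2) _ Suc.prems(5)]) (use rge Suc.prems in auto)
    then show ?thesis using a by simp
  next
    assume a: "\<rho> \<in># R'"
    have "\<rho> \<in># R" by (rule key_in[OF a _ Rne(1) _ Suc.prems(5)]) (use rge Suc.prems in auto)
    then show ?thesis using a by simp
  qed
  obtain R0 where R0: "R = add_mset \<rho> R0" using both by (metis insert_DiffM)
  obtain R0' where R0': "R' = add_mset \<rho> R0'" using both by (metis insert_DiffM)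
  have "\<forall>t. 0 < t \<longrightarrow> t \<notin> F \<longrightarrow> G R0 t = G R0' t"
  proof (intro allI impI)
    fix t :: real assume t: "0 < t" "t \<notin> F"
    have "max t \<rho> * G R0 t = max t \<rho> * G R0' t" using Suc.prems(6) t R0 R0' by simp
    moreover have "max t \<rho> > 0" using t by simp
    ultimately show "G R0 t = G R0' t" by simp
  qed
  then have "R0 = R0'" using Suc.IH[of R0 R0'] Suc.prems R0 R0' by auto
  then show ?case using R0 R0' by simp
qed


lemma tassoc_root:
  assumes d: "deg1 q" "deg1 q'" and r: "q 0 / q 1 = q' 0 / q' 1"
  shows "tassoc q q'"
proof -
  have t: "tpoly q" "tpoly q'" and a: "0 < q 1" "0 < q' 1"
    and z: "\<And>k. k \<ge> 2 \<Longrightarrow> q k = 0" "\<And>k. k \<ge> 2 \<Longrightarrow> q' k = 0"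
    using d by (auto simp: deg1_def)
  define c where "c = q 1 / q' 1"
  have c: "0 < c" using a by (simp add: c_def)
  have "q = (\<lambda>i. c * q' i)"
  proof
    fix i :: nat
    consider "i = 0" | "i = 1" | "i \<ge> 2" by linarith
    then show "q i = c * q' i"
    proof cases
      case 1
      have "q 0 = q 1 * (q' 0 / q' 1)" using r a by (simp add: field_simps)
      then show ?thesis using 1 by (simp add: c_def)
    next
      case 2 then show ?thesis using a by (simp add: c_def)
    next
      case 3 then show ?thesis using z by simp
    qed
  qed
  then have "q \<in> thprod (tconst c) q'" using thprod_scal[OF t(2)] c by simp
  moreover have "0 \<le> c" "c \<noteq> 0" using c by auto
  ultimately show ?thesis unfolding tassoc_def by blast
qed

theorem mainTheorem5:
  shows "(\<forall>p. tpoly p \<longrightarrow> (tirred p \<longleftrightarrow> tdeg p = 1)) \<and>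
    (\<forall>p qs qs'. qs \<noteq> [] \<longrightarrow> qs' \<noteq> [] \<longrightarrow>
       (\<forall>q\<in>set qs. tirred q) \<longrightarrow> (\<forall>q\<in>set qs'. tirred q) \<longrightarrow>
       p \<in> thprod_list qs \<longrightarrow> p \<in> thprod_list qs' \<longrightarrow>
       length qs = length qs' \<and>
       (\<exists>\<sigma>. bij_betw \<sigma> {..<length qs} {..<length qs} \<and>
            (\<forall>i<length qs. tassoc (qs ! i) (qs' ! \<sigma> i))))"
proof (intro conjI allI impI)
  fix p assume "tpoly p" then show "tirred p \<longleftrightarrow> tdeg p = 1" by (rule part1)
next
  fix p qs qs'
  assume ne: "qs \<noteq> []" "qs' \<noteq> []" and ir: "\<forall>q\<in>set qs. tirred q" "\<forall>q\<in>set qs'. tirred q"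
    and p: "p \<in> thprod_list qs" "p \<in> thprod_list qs'"
  define rt where "rt = (\<lambda>q::nat \<Rightarrow> real. q 0 / q 1)"
  have d: "\<forall>q\<in>set qs. deg1 q" "\<forall>q\<in>set qs'. deg1 q" using ir irred_deg1' by auto
  define C where "C = prod_list (map (\<lambda>q. q 1) qs)"
  define C' where "C' = prod_list (map (\<lambda>q. q 1) qs')"
  define R where "R = mset (map rt qs)"
  define R' where "R' = mset (map rt qs')"
  have i1: "tinv p C R" unfolding C_def R_def rt_def by (rule inv_prodlist[OF ne(1) d(1) p(1)])
  have i2: "tinv p C' R'" unfolding C'_def R'_def rt_def by (rule inv_prodlist[OF ne(2) d(2) p(2)])
  have Cp: "0 < C" "0 < C'" using i1 i2 by (auto simp: tinv_def)
  have nnR: "\<forall>x\<in>#R. 0 \<le> x" "\<forall>x\<in>#R'. 0 \<le> x"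
    using d unfolding R_def R'_def rt_def deg1_def by (auto simp: tpoly_nn)
  define F where "F = set_mset R \<union> set_mset R'"
  have F: "finite F" by (simp add: F_def)
  have eq: "C * G R t = C' * G R' t" if t: "0 < t" "t \<notin> F" for t
  proof (rule antisym)
    obtain j where "p j * t ^ j = C * G R t" using i1 t unfolding tinv_def F_def by blast
    moreover have "p j * t ^ j \<le> C' * G R' t" using i2 t unfolding tinv_def by blast
    ultimately show "C * G R t \<le> C' * G R' t" by simp
    obtain j' where "p j' * t ^ j' = C' * G R' t" using i2 t unfolding tinv_def F_def by blast
    moreover have "p j' * t ^ j' \<le> C * G R t" using i1 t unfolding tinv_def by blast
    ultimately show "C' * G R' t \<le> C * G R t" by simp
  qed
  have sz: "size R = size R'" and CC: "C = C'" using sizes_eq[OF F Cp eq] by auto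
  have "\<forall>t. 0 < t \<longrightarrow> t \<notin> F \<longrightarrow> G R t = G R' t" using eq CC Cp by auto
  then have RR: "R = R'" using G_unique[OF refl sz[symmetric] nnR F] by blast
  show len: "length qs = length qs'" using sz unfolding R_def R'_def by simp
  have "map rt qs <~~> map rt qs'" using RR unfolding R_def R'_def .
  from permutation_Ex_bij[OF this] obtain f where
    f0: "bij_betw f {..<length qs} {..<length qs'}" "\<forall>i<length qs. map rt qs ! i = map rt qs' ! f i"
    by auto
  have f: "bij_betw f {..<length qs} {..<length qs'}" "\<forall>i<length qs. rt (qs ! i) = rt (qs' ! f i)"
  proof -
    show "bij_betw f {..<length qs} {..<length qs'}" by (rule f0(1))
    show "\<forall>i<length qs. rt (qs ! i) = rt (qs' ! f i)"
    proof (intro allI impI)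
      fix i assume i: "i < length qs"
      have fi: "f i < length qs'" using f0(1) i by (auto simp: bij_betw_def)
      show "rt (qs ! i) = rt (qs' ! f i)" using f0(2) i fi by auto
    qed
  qed
  have "\<forall>i<length qs. tassoc (qs ! i) (qs' ! f i)"
  proof (intro allI impI)
    fix i assume i: "i < length qs"
    have fi: "f i < length qs'" using f(1) i by (auto simp: bij_betw_def)
    show "tassoc (qs ! i) (qs' ! f i)"
      by (rule tassoc_root) (use d i fi f(2) in \<open>auto simp: rt_def\<close>)
  qed
  then show "\<exists>\<sigma>. bij_betw \<sigma> {..<length qs} {..<length qs} \<and> (\<forall>i<length qs. tassoc (qs ! i) (qs' ! \<sigma> i))"
    using f(1) len by auto
qed

end
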